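(* Let the Standing Assumption hold, and assume in addition that $f(z)=J(z)\eta(z)$ for all $z\in\mathbb R^n$, for some (unknown) map $J\colon\mathbb R^n\to\mathbb R^{n\times n}$ with $J(z)=-J(z)^{\mathsf T}$. Then: 1. There exists $P\colon\mathbb R^n\to\mathbb R^{n\times n}$ such that $P(z)\eta(z)=0$ and $M(z)_{\mathsf H}+P(z)_{\mathsf H}=0$ for all $z\in\mathbb R^n$. 2. Let $z\in\mathbb R^n$ satisfy $\eta(z)\ne0$ and $\eta_i(z)\neq 0$ for $i=2,\dots,n-1$. Then there is exactly one matrix $P\in\mathbb R^{n\times n}$ such that: - $P\eta(z)=0$; - $P_{\mathsf H}=-M(z)_{\mathsf H}$; - $P_{\mathsf S}$ is tridiagonal. Equivalently, the entries $p=(p_1,\dots,p_{n-1})$ of the superdiagonal of $P_{\mathsf S}$ form the unique solution of $T(\eta(z))\,p=M(z)_{\mathsf H}\,\eta(z)$. Here $T(\eta)\in\mathbb R^{n\times(n-1)}$ is the matrix whose $k$-th column has entry $\eta_{k+1}$ in row $k$, entry $-\eta_k$ in row $k+1$, and zeros elsewhere.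
   Context: Setting. Let $n,m$ be positive integers. Let $\mathcal H\colon\mathbb R^n\to\mathbb R$ be continuously differentiable with $\mathcal H\ge 0$, and set $\eta\coloneq\nabla\mathcal H\colon\mathbb R^n\to\mathbb R^n$. Let $f\colon\mathbb R^n\to\mathbb R^n$ and $B\colon\mathbb R^n\to\mathbb R^{n\times m}$. Consider the system $\dot z = f(z)+B(z)u$, $y=B(z)^{\mathsf T}\eta(z)$. Notation. For $A\in\mathbb R^{n\times n}$: $A_{\mathsf H}\coloneq\tfrac12(A+A^{\mathsf T})$ and $A_{\mathsf S}\coloneq\tfrac12(A-A^{\mathsf T})$. Property (P): there exist $p\in\mathbb N$ and $\ell\colon\mathbb R^n\to\mathbb R^p$ with $\eta(z)^{\mathsf T}f(z)=-\ell(z)^{\mathsf T}\ell(z)$ for all $z$. Standing Assumption: property (P) holds; $f,\eta$ are $C^1$; $\eta\colon\mathbb R^n\to\mathbb R^n$ is bijective; $f(\eta^{-1}(0))=0$; and $D\eta(z)$ is invertible for all $z\in\mathbb R^n$. Definition of $M$. Under the Standing Assumption $\eta^{-1}$ is $C^1$, and $M(z)\coloneq\int_0^1 D(f\circ\eta^{-1})(s\,\eta(z))\,\mathrm ds=\int_0^1 Df(\zeta_s)D\eta(\zeta_s)^{-1}\,\mathrm ds$, where $\zeta_s\coloneq\eta^{-1}(s\eta(z))$. This satisfies $f(z)=M(z)\eta(z)$ for all $z$. *)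

theory Defs
  imports "HOL-Analysis.Analysis"
begin

text \<open>Euclidean n-space is real^'n with a finite linearly ordered index type 'n;
  ix k (for 1 \<le> k \<le> CARD('n)) is the k-th index in increasing order, so that
  component i of a vector x is x $ ix i.\<close>

definition ix :: "nat \<Rightarrow> 'n::{finite,linorder}" where
  "ix k = sorted_list_of_set (UNIV :: 'n set) ! (k - 1)"

definition jac :: "(real^'n \<Rightarrow> real^'n) \<Rightarrow> real^'n \<Rightarrow> real^'n^'n" where
  "jac g z = matrix (frechet_derivative g (at z))"

definition C1_map :: "(real^'n \<Rightarrow> real^'n) \<Rightarrow> bool" where
  "C1_map g \<longleftrightarrow> (\<forall>z. g differentiable (at z)) \<and> continuous_on UNIV (jac g)"

definition herm :: "real^'n^'n \<Rightarrow> real^'n^'n" where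
  "herm A = (1/2) *\<^sub>R (A + transpose A)"

definition skew :: "real^'n^'n \<Rightarrow> real^'n^'n" where
  "skew A = (1/2) *\<^sub>R (A - transpose A)"

definition Mmat :: "(real^'n \<Rightarrow> real^'n) \<Rightarrow> (real^'n \<Rightarrow> real^'n) \<Rightarrow> real^'n \<Rightarrow> real^'n^'n" where
  "Mmat f \<eta> z = integral {0..1} (\<lambda>s::real.
     jac f (inv \<eta> (s *\<^sub>R \<eta> z)) ** matrix_inv (jac \<eta> (inv \<eta> (s *\<^sub>R \<eta> z))))"

definition tridiag :: "real^('n::{finite,linorder})^('n::{finite,linorder}) \<Rightarrow> bool" where
  "tridiag A \<longleftrightarrow> (\<forall>i\<in>{1..CARD('n)}. \<forall>j\<in>{1..CARD('n)}.
      (i + 1 < j \<or> j + 1 < i) \<longrightarrow> A $ ix i $ ix j = 0)"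

text \<open>T(e) in R^{n x (n-1)}: entry (i,k) for 1 \<le> i \<le> n, 1 \<le> k \<le> n-1.\<close>
definition Tmat :: "real^'n::{finite,linorder} \<Rightarrow> nat \<Rightarrow> nat \<Rightarrow> real" where
  "Tmat e i k = (if i = k then e $ ix (k + 1) else if i = k + 1 then - (e $ ix k) else 0)"

end

theory Submission
  imports Defs
begin

lemma jac_deriv:
  fixes g :: "real^'n \<Rightarrow> real^'n"
  assumes "g differentiable (at z)"
  shows "(g has_derivative (\<lambda>v. jac g z *v v)) (at z)"
proof -
  have d: "(g has_derivative frechet_derivative g (at z)) (at z)"
    using assms frechet_derivative_works by blast
  then have "linear (frechet_derivative g (at z))" using has_derivative_linear by blast
  then have "\<And>v. jac g z *v v = frechet_derivative g (at z) v"
    unfolding jac_def by (simp add: matrix_works)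
  then show ?thesis using d by simp
qed

lemma matrix_inv_both:
  fixes A :: "real^'n^'n"
  assumes "invertible A"
  shows "A ** matrix_inv A = mat 1 \<and> matrix_inv A ** A = mat 1"
  using assms unfolding invertible_def matrix_inv_def by (rule someI_ex)

lemma continuous_on_det:
  fixes F :: "'a::topological_space \<Rightarrow> real^'n^'n"
  assumes "continuous_on S F"
  shows "continuous_on S (\<lambda>x. det (F x))"
  unfolding det_def
  by (intro continuous_intros continuous_on_component assms)

lemma matrix_inv_entry:
  fixes A :: "real^'n^'n"
  assumes "invertible A"
  shows "matrix_inv A $ i $ k = det (\<chi> a b. if b = i then axis k 1 $ a else A$a$b) / det A"
proof -
  have d: "det A \<noteq> 0" using assms invertible_det_nz by blast
  have "A *v (matrix_inv A *v axis k 1) = axis k 1"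
    using matrix_inv_both[OF assms] by (simp add: matrix_vector_mul_assoc)
  then have "matrix_inv A *v axis k 1 = (\<chi> j. det(\<chi> a b. if b=j then axis k 1$a else A$a$b) / det A)"
    using cramer[OF d] by blast
  moreover have "(matrix_inv A *v axis k 1) $ i = matrix_inv A $ i $ k"
    by (simp add: matrix_vector_mult_basis column_def)
  ultimately show ?thesis by simp
qed

lemma continuous_on_matrix_inv:
  fixes F :: "'a::topological_space \<Rightarrow> real^'n^'n"
  assumes "continuous_on S F" "\<And>x. x \<in> S \<Longrightarrow> invertible (F x)"
  shows "continuous_on S (\<lambda>x. matrix_inv (F x))"
proof -
  have eq: "\<And>x. x \<in> S \<Longrightarrow> matrix_inv (F x) = (\<chi> i k. det (\<chi> a b. if b = i then axis k 1 $ a else F x$a$b) / det (F x))"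
    by (simp add: vec_eq_iff matrix_inv_entry assms(2))
  have "continuous_on S (\<lambda>x. (\<chi> i k. det (\<chi> a b. if b = i then axis k 1 $ a else F x$a$b) / det (F x)) :: real^'n^'n)"
    apply (intro continuous_on_vec_lambda continuous_on_divide continuous_on_det)
    subgoal for i k a b by (cases "b = i") (auto intro!: continuous_on_component assms(1))
    subgoal by (rule assms(1))
    by (meson assms(2) invertible_det_nz)
  then show ?thesis using continuous_on_cong[OF refl eq] by (rule iffD2[rotated])
qed

lemma inv_deriv:
  fixes \<eta> :: "real^'n \<Rightarrow> real^'n"
  assumes eta_C1: "C1_map \<eta>" and bij: "bij \<eta>" and Dinv: "\<And>z. invertible (jac \<eta> z)"
  shows "(inv \<eta> has_derivative (\<lambda>v. matrix_inv (jac \<eta> (inv \<eta> y)) *v v)) (at y)"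
proof -
  let ?x = "inv \<eta> y"
  have cont: "continuous_on UNIV \<eta>"
    using eta_C1 unfolding C1_map_def by (simp add: differentiable_imp_continuous_on differentiable_on_def differentiable_at_withinI)
  have der: "(\<eta> has_derivative (\<lambda>v. jac \<eta> ?x *v v)) (at ?x)"
    using eta_C1 unfolding C1_map_def by (simp add: jac_deriv)
  have id: "(\<lambda>v. jac \<eta> ?x *v v) \<circ> (\<lambda>v. matrix_inv (jac \<eta> ?x) *v v) = id"
    using matrix_inv_both[OF Dinv[of ?x]] by (auto simp: matrix_vector_mul_assoc)
  have "(inv \<eta> has_derivative (\<lambda>v. matrix_inv (jac \<eta> ?x) *v v)) (at (\<eta> ?x))"
    by (rule has_derivative_inverse_strong[OF open_UNIV UNIV_I cont _ der id])
       (simp add: bij bij_is_inj)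
  moreover have "\<eta> ?x = y" using bij by (simp add: bij_is_surj surj_f_inv_f)
  ultimately show ?thesis by simp
qed

lemma key_M:
  fixes \<eta> f :: "real^'n \<Rightarrow> real^'n"
  assumes f_C1: "C1_map f" and eta_C1: "C1_map \<eta>" and bij: "bij \<eta>"
    and f_zero: "f (inv \<eta> 0) = 0" and Dinv: "\<And>z. invertible (jac \<eta> z)"
  shows "f z = Mmat f \<eta> z *v \<eta> z"
proof -
  define \<zeta> where "\<zeta> s = inv \<eta> (s *\<^sub>R \<eta> z)" for s :: real
  define A where "A s = jac f (\<zeta> s) ** matrix_inv (jac \<eta> (\<zeta> s))" for s
  have invd: "\<And>y. (inv \<eta> has_derivative (\<lambda>v. matrix_inv (jac \<eta> (inv \<eta> y)) *v v)) (at y)"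
    using inv_deriv[OF eta_C1 bij Dinv] .
  have cinv: "continuous_on UNIV (inv \<eta>)"
    using invd by (meson continuous_at_imp_continuous_on has_derivative_continuous)
  have cz: "continuous_on UNIV \<zeta>"
    unfolding \<zeta>_def by (intro continuous_on_compose2[OF cinv] continuous_intros) auto
  have cA: "continuous_on UNIV A"
    unfolding A_def matrix_matrix_mult_def
  proof (intro continuous_on_vec_lambda continuous_on_sum continuous_on_mult continuous_on_component)
    show "continuous_on UNIV (\<lambda>x. jac f (\<zeta> x))"
      using f_C1 unfolding C1_map_def by (intro continuous_on_compose2[OF _ cz]) auto
    show "continuous_on UNIV (\<lambda>x. matrix_inv (jac \<eta> (\<zeta> x)))"
      using eta_C1 unfolding C1_map_def
      by (intro continuous_on_matrix_inv continuous_on_compose2[OF _ cz] Dinv) auto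
  qed
  have intA: "A integrable_on {0..1}"
    by (rule integrable_continuous_interval) (rule continuous_on_subset[OF cA], simp)
  define g where "g s = f (\<zeta> s)" for s
  have gd: "(g has_vector_derivative (A s *v \<eta> z)) (at s)" for s
  proof -
    have d1: "((\<lambda>s. s *\<^sub>R \<eta> z) has_derivative (\<lambda>t. t *\<^sub>R \<eta> z)) (at s)"
      by (intro derivative_eq_intros) auto
    have d2: "(\<zeta> has_derivative (\<lambda>t. matrix_inv (jac \<eta> (\<zeta> s)) *v (t *\<^sub>R \<eta> z))) (at s)"
      unfolding \<zeta>_def using has_derivative_compose[OF d1 invd] by (simp add: o_def)
    have d3: "(f has_derivative (\<lambda>v. jac f (\<zeta> s) *v v)) (at (\<zeta> s))"
      using f_C1 unfolding C1_map_def by (simp add: jac_deriv)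
    have "(g has_derivative (\<lambda>t. jac f (\<zeta> s) *v (matrix_inv (jac \<eta> (\<zeta> s)) *v (t *\<^sub>R \<eta> z)))) (at s)"
      unfolding g_def using has_derivative_compose[OF d2 d3] by (simp add: o_def)
    moreover have "\<And>t. jac f (\<zeta> s) *v (matrix_inv (jac \<eta> (\<zeta> s)) *v (t *\<^sub>R \<eta> z)) = t *\<^sub>R (A s *v \<eta> z)"
      unfolding A_def by (simp add: matrix_vector_mul_assoc[symmetric] matrix_vector_mult_scaleR)
    ultimately show ?thesis unfolding has_vector_derivative_def by simp
  qed
  have "((\<lambda>s. A s *v \<eta> z) has_integral (g 1 - g 0)) {0..1}"
    by (rule fundamental_theorem_of_calculus) (auto intro: has_vector_derivative_at_within gd)
  moreover have "g 1 = f z" unfolding g_def \<zeta>_def using bij by (simp add: bij_is_inj)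
  moreover have "g 0 = 0" unfolding g_def \<zeta>_def using f_zero by simp
  ultimately have "integral {0..1} (\<lambda>s. A s *v \<eta> z) = f z" by (simp add: integral_unique)
  moreover have "integral {0..1} (\<lambda>s. A s *v \<eta> z) = integral {0..1} A *v \<eta> z"
  proof -
    have bl: "bounded_linear (\<lambda>B::real^'n^'n. B *v \<eta> z)"
      unfolding linear_conv_bounded_linear[symmetric]
      by (rule linearI) (auto simp: matrix_vector_mult_add_rdistrib scaleR_matrix_vector_assoc)
    show ?thesis using integral_linear[OF intA bl] by (simp add: o_def)
  qed
  moreover have "Mmat f \<eta> z = integral {0..1} A"
    unfolding Mmat_def A_def \<zeta>_def ..
  ultimately show ?thesis by simp
qed


lemma ix_bij: "bij_betw (ix :: nat \<Rightarrow> 'n::{finite,linorder}) {1..CARD('n)} UNIV"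
proof -
  let ?L = "sorted_list_of_set (UNIV :: 'n set)"
  have b1: "bij_betw ((!) ?L) {..<CARD('n)} UNIV"
    by (rule bij_betw_nth) auto
  have b2: "bij_betw (\<lambda>k::nat. k - 1) {1..CARD('n)} {..<CARD('n)}"
    by (rule bij_betwI[where g="\<lambda>k. k + 1"]) auto
  have "bij_betw ((!) ?L \<circ> (\<lambda>k::nat. k - 1)) {1..CARD('n)} UNIV"
    by (rule bij_betw_trans[OF b2 b1])
  moreover have "((!) ?L \<circ> (\<lambda>k::nat. k - 1)) = ix" by (auto simp: ix_def)
  ultimately show ?thesis by simp
qed

lemma sum_ix: "(\<Sum>a\<in>UNIV. F a) = (\<Sum>k=1..CARD('n). F (ix k :: 'n::{finite,linorder}))"
  using sum.reindex_bij_betw[OF ix_bij, of F] by simp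

lemma ix_inj: "i \<in> {1..CARD('n)} \<Longrightarrow> j \<in> {1..CARD('n)} \<Longrightarrow> (ix i :: 'n::{finite,linorder}) = ix j \<Longrightarrow> i = j"
  using ix_bij[where 'n='n] unfolding bij_betw_def inj_on_def by blast

lemma ix_surj: "\<exists>k\<in>{1..CARD('n)}. ix k = (a :: 'n::{finite,linorder})"
  using ix_bij[where 'n='n] unfolding bij_betw_def by (metis UNIV_I imageE)

lemma vec_eq_ix:
  fixes x y :: "'a^'n::{finite,linorder}"
  assumes "\<And>i. i \<in> {1..CARD('n)} \<Longrightarrow> x $ ix i = y $ ix i"
  shows "x = y"
  unfolding vec_eq_iff using assms ix_surj by metis

definition rowf :: "real^'n::{finite,linorder} \<Rightarrow> (nat \<Rightarrow> real) \<Rightarrow> nat \<Rightarrow> real" where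
  "rowf e q i = (if i + 1 \<le> CARD('n) then e $ ix (i+1) * q i else 0)
              - (if 2 \<le> i then e $ ix (i-1) * q (i-1) else 0)"

lemma Tsum:
  fixes e :: "real^'n::{finite,linorder}"
  assumes "i \<in> {1..CARD('n)}"
  shows "(\<Sum>k=1..CARD('n) - 1. Tmat e i k * q k) = rowf e q i"
proof -
  have "(\<Sum>k=1..CARD('n) - 1. Tmat e i k * q k)
      = (\<Sum>k=1..CARD('n) - 1. (if k = i then e $ ix (i+1) * q i else 0)
                             + (if k = i - 1 then - e $ ix (i-1) * q (i-1) else 0))"
    using assms by (intro sum.cong) (auto simp: Tmat_def)
  also have "\<dots> = rowf e q i"
    using assms by (auto simp: sum.distrib rowf_def)
  finally show ?thesis .
qed

lemma Ssum:
  fixes e :: "real^'n::{finite,linorder}" and S :: "real^'n::{finite,linorder}^'n::{finite,linorder}"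
  assumes sk: "transpose S = - S" and tr: "tridiag S" and i: "i \<in> {1..CARD('n)}"
  shows "(S *v e) $ ix i = rowf e (\<lambda>k. S $ ix k $ ix (k+1)) i"
proof -
  have diag: "S $ a $ a = 0" for a
  proof -
    have "transpose S $ a $ a = - S $ a $ a" using sk by simp
    then show ?thesis by (simp add: transpose_def)
  qed
  have anti: "S $ a $ b = - S $ b $ a" for a b
  proof -
    have "transpose S $ b $ a = - S $ b $ a" using sk by simp
    then show ?thesis by (simp add: transpose_def)
  qed
  have "(S *v e) $ ix i = (\<Sum>k=1..CARD('n). S $ ix i $ ix k * e $ ix k)"
    by (simp add: matrix_vector_mult_def sum_ix)
  also have "\<dots> = (\<Sum>k=1..CARD('n). (if k = i + 1 then e $ ix (i+1) * S $ ix i $ ix (i+1) else 0)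
                   + (if k = i - 1 then - (e $ ix (i-1) * S $ ix (i-1) $ ix i) else 0))"
  proof (intro sum.cong refl)
    fix k assume k: "k \<in> {1..CARD('n)}"
    show "S $ ix i $ ix k * e $ ix k = (if k = i + 1 then e $ ix (i+1) * S $ ix i $ ix (i+1) else 0)
                   + (if k = i - 1 then - (e $ ix (i-1) * S $ ix (i-1) $ ix i) else 0)"
    proof -
      consider "k = i + 1" | "k = i" | "k + 1 = i" | "i + 1 < k \<or> k + 1 < i" by linarith
      then show ?thesis
      proof cases
        case 1 then show ?thesis by simp
      next
        case 2 then show ?thesis using i by (simp add: diag)
      next
        case 3 then show ?thesis using anti[of "ix i" "ix k"] by auto
      next
        case 4 then show ?thesis using tr i k unfolding tridiag_def by auto
      qed
    qed
  qed
  also have "\<dots> = rowf e (\<lambda>k. S $ ix k $ ix (k+1)) i"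
    using i by (auto simp: sum.distrib rowf_def)
  finally show ?thesis .
qed


lemma kernel:
  fixes e :: "real^'n::{finite,linorder}"
  assumes rows: "\<And>i. i \<in> {1..CARD('n)} \<Longrightarrow> rowf e d i = 0"
    and ne: "e \<noteq> 0" and hyp: "\<forall>i\<in>{2..CARD('n) - 1}. e $ ix i \<noteq> 0"
  shows "\<forall>k\<in>{1..CARD('n) - 1}. d k = 0"
proof -
  let ?N = "CARD('n)"
  have fw: "1 \<le> k \<longrightarrow> k + 1 \<le> ?N - 1 \<longrightarrow> d k = 0" for k
  proof (induction k)
    case 0 then show ?case by simp
  next
    case (Suc k)
    show ?case
    proof (intro impI)
      assume a: "1 \<le> Suc k" "Suc k + 1 \<le> ?N - 1"
      have r: "rowf e d (Suc k) = 0" using rows a by auto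
      have nz: "e $ ix (Suc k + 1) \<noteq> 0" using hyp a by auto
      have prev: "2 \<le> Suc k \<longrightarrow> d k = 0" using Suc a by auto
      have "rowf e d (Suc k) = e $ ix (Suc k + 1) * d (Suc k) - (if 2 \<le> Suc k then e $ ix k * d k else 0)"
        using a by (simp add: rowf_def)
      with r prev have "e $ ix (Suc k + 1) * d (Suc k) = 0"
        by (cases "2 \<le> Suc k") auto
      then show "d (Suc k) = 0" using nz by simp
    qed
  qed
  show ?thesis
  proof
    fix k assume k: "k \<in> {1..?N - 1}"
    show "d k = 0"
    proof (cases "k + 1 \<le> ?N - 1")
      case True then show ?thesis using fw k by auto
    next
      case False
      then have kN: "k = ?N - 1" using k by auto
      show ?thesis
      proof (cases "?N \<ge> 3")
        case True
        have r: "rowf e d ?N = 0" using rows k by auto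
        have nz: "e $ ix (?N - 1) \<noteq> 0" using hyp True by auto
        from r have "e $ ix (?N - 1) * d (?N - 1) = 0" using True by (simp add: rowf_def)
        then show ?thesis using nz kN by simp
      next
        case False
        then have N2: "?N = 2" using k by auto
        then have k1: "k = 1" using kN by simp
        have r1: "e $ ix 2 * d 1 = 0" using rows[of 1] N2 by (simp add: rowf_def numeral_2_eq_2)
        have r2: "e $ ix 1 * d 1 = 0" using rows[of 2] N2 by (simp add: rowf_def)
        obtain j where j: "j \<in> {1..?N}" "e $ ix j \<noteq> 0"
          using ne vec_eq_ix[of e 0] by auto
        then have "j = 1 \<or> j = 2" using N2 by auto
        then show ?thesis using r1 r2 j k1 by auto
      qed
    qed
  qed
qed

lemma telesc:
  fixes e :: "real^'n::{finite,linorder}"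
  shows "(\<Sum>i=1..CARD('n). e $ ix i * rowf e q i) = 0"
proof -
  let ?N = "CARD('n)"
  have "(\<Sum>i=1..?N. e $ ix i * rowf e q i)
      = (\<Sum>i=1..?N. (if i + 1 \<le> ?N then e $ ix i * e $ ix (i+1) * q i else 0))
      - (\<Sum>i=1..?N. (if 2 \<le> i then e $ ix i * e $ ix (i-1) * q (i-1) else 0))"
    by (simp add: rowf_def sum_subtractf[symmetric] right_diff_distrib) (intro sum.cong, auto)
  also have "(\<Sum>i=1..?N. (if i + 1 \<le> ?N then e $ ix i * e $ ix (i+1) * q i else 0))
           = (\<Sum>i=1..?N-1. e $ ix i * e $ ix (i+1) * q i)"
    by (rule sum.mono_neutral_cong_right) auto
  also have "(\<Sum>i=1..?N. (if 2 \<le> i then e $ ix i * e $ ix (i-1) * q (i-1) else 0))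
           = (\<Sum>i=2..?N. e $ ix i * e $ ix (i-1) * q (i-1))"
    by (rule sum.mono_neutral_cong_right) auto
  also have "\<dots> = (\<Sum>i=1..?N-1. e $ ix (i+1) * e $ ix i * q i)"
  proof (cases "?N")
    case 0 then show ?thesis by simp
  next
    case (Suc m)
    then show ?thesis using sum.shift_bounds_cl_Suc_ivl[of "\<lambda>i. e $ ix i * e $ ix (i-1) * q (i-1)" 1 m]
      by (simp add: numeral_2_eq_2)
  qed
  finally show ?thesis by (simp add: mult.commute)
qed


lemma fix_one:
  fixes e :: "real^'n::{finite,linorder}"
  assumes j: "j \<in> {1..CARD('n)}" "e $ ix j \<noteq> 0"
    and rows: "\<And>i. i \<in> {1..CARD('n)} \<Longrightarrow> i \<noteq> j \<Longrightarrow> rowf e q i = v i"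
    and orth: "(\<Sum>i=1..CARD('n). e $ ix i * v i) = 0"
  shows "\<forall>i\<in>{1..CARD('n)}. rowf e q i = v i"
proof -
  have "(\<Sum>i=1..CARD('n). e $ ix i * (rowf e q i - v i)) = 0"
    using telesc[of e q] orth by (simp add: right_diff_distrib sum_subtractf)
  moreover have "(\<Sum>i=1..CARD('n). e $ ix i * (rowf e q i - v i))
        = (\<Sum>i=1..CARD('n). if i = j then e $ ix j * (rowf e q j - v j) else 0)"
    using rows by (intro sum.cong) auto
  ultimately have "e $ ix j * (rowf e q j - v j) = 0" using j by simp
  then have "rowf e q j = v j" using j by simp
  then show ?thesis using rows by metis
qed

fun pseq :: "(nat \<Rightarrow> real) \<Rightarrow> (nat \<Rightarrow> real) \<Rightarrow> nat \<Rightarrow> real" where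
  "pseq E W 0 = 0"
| "pseq E W (Suc k) = (W (Suc k) + E k * pseq E W k) / E (k + 2)"

lemma exist_sol:
  fixes e :: "real^'n::{finite,linorder}"
  assumes ne: "e \<noteq> 0" and hyp: "\<forall>i\<in>{2..CARD('n) - 1}. e $ ix i \<noteq> 0"
    and orth: "(\<Sum>i=1..CARD('n). e $ ix i * v i) = 0"
  shows "\<exists>q. \<forall>i\<in>{1..CARD('n)}. rowf e q i = v i"
proof -
  let ?N = "CARD('n)"
  have N1: "?N \<ge> 1" by (simp add: Suc_leI)
  consider "?N = 1" | "?N = 2" | "?N \<ge> 3" using N1 by linarith
  then show ?thesis
  proof cases
    case 1
    obtain j where j: "j \<in> {1..?N}" "e $ ix j \<noteq> 0"
      using ne vec_eq_ix[of e 0] by auto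
    show ?thesis
      by (rule exI, rule fix_one[OF j _ orth]) (use 1 j in auto)
  next
    case 2
    obtain j where j: "j \<in> {1..?N}" "e $ ix j \<noteq> 0"
      using ne vec_eq_ix[of e 0] by auto
    show ?thesis
    proof (cases "e $ ix 1 = 0")
      case True
      then have j2: "j = 2" using j 2 by (cases "j = 1") auto
      show ?thesis
      proof (rule exI, rule fix_one[OF j _ orth, where q="\<lambda>k. v 1 / e $ ix 2"])
        fix i assume "i \<in> {1..?N}" "i \<noteq> j"
        then have "i = 1" using 2 j2 by auto
        then show "rowf e (\<lambda>k. v 1 / e $ ix 2) i = v i" using 2 j j2 by (simp add: rowf_def numeral_2_eq_2)
      qed
    next
      case False
      have j1: "1 \<in> {1..?N}" using 2 by simp
      show ?thesis
      proof (rule exI, rule fix_one[OF j1 False _ orth, where q="\<lambda>k. - v 2 / e $ ix 1"])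
        fix i assume "i \<in> {1..?N}" "i \<noteq> 1"
        then have "i = 2" using 2 by auto
        then show "rowf e (\<lambda>k. - v 2 / e $ ix 1) i = v i" using 2 False by (simp add: rowf_def)
      qed
    qed
  next
    case 3
    define E where "E i = e $ ix i" for i
    define q where "q k = (if k = ?N - 1 then - v ?N / e $ ix (?N - 1) else pseq E v k)" for k
    have jN: "?N - 1 \<in> {1..?N}" using 3 by auto
    have nzN: "e $ ix (?N - 1) \<noteq> 0" using hyp 3 by auto
    have "\<forall>i\<in>{1..?N}. rowf e q i = v i"
    proof (rule fix_one[OF jN nzN _ orth])
      fix i assume i: "i \<in> {1..?N}" "i \<noteq> ?N - 1"
      show "rowf e q i = v i"
      proof (cases "i = ?N")
        case True
        then show ?thesis using 3 nzN by (simp add: rowf_def q_def)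
      next
        case False
        then obtain m where m: "i = Suc m" "Suc m + 1 \<le> ?N - 1" using i by (cases i) auto
        have nz: "e $ ix (m + 2) \<noteq> 0" using hyp m by auto
        have qi: "q i = (v i + E m * pseq E v m) / e $ ix (m + 2)"
          using m by (simp add: q_def E_def)
        have qm: "q m = pseq E v m" using m by (simp add: q_def)
        have "rowf e q i = e $ ix (m + 2) * q i - (if 2 \<le> i then e $ ix m * q m else 0)"
          using m by (simp add: rowf_def)
        also have "\<dots> = e $ ix (m + 2) * ((v i + E m * pseq E v m) / e $ ix (m + 2)) - (if 2 \<le> i then e $ ix m * pseq E v m else 0)"
          by (simp only: qi qm)
        also have "\<dots> = v i"
          using nz m by (cases m) (auto simp: E_def)
        finally show ?thesis .
      qed
    qed
    then show ?thesis by blast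
  qed
qed


lemma herm_skew_sum: "herm P + skew P = (P :: real^'n^'n)"
  by (simp add: herm_def skew_def vec_eq_iff algebra_simps)

lemma skew_transpose: "transpose (skew P) = - skew (P :: real^'n^'n)"
  by (simp add: skew_def vec_eq_iff transpose_def algebra_simps)

lemma skew_mult:
  fixes P V :: "real^'n^'n"
  assumes "P *v e = 0" "herm P = - V"
  shows "skew P *v e = V *v e"
proof -
  have "0 = (herm P + skew P) *v e" using assms(1) herm_skew_sum[of P] by simp
  also have "\<dots> = - (V *v e) + skew P *v e"
  proof -
    have "(- V) *v e = - (V *v e)" by (simp add: vec_eq_iff matrix_vector_mult_def sum_negf)
    then show ?thesis using assms(2) by (simp add: matrix_vector_mult_add_rdistrib matrix_vector_mult_diff_rdistrib)
  qed
  finally show ?thesis by (simp add: eq_neg_iff_add_eq_0 algebra_simps)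
qed

lemma part2:
  fixes e :: "real^'n::{finite,linorder}" and V :: "real^'n::{finite,linorder}^'n::{finite,linorder}"
  assumes symV: "transpose V = V" and orth: "e \<bullet> (V *v e) = 0" and ne: "e \<noteq> 0"
    and hyp: "\<forall>i\<in>{2..CARD('n) - 1}. e $ ix i \<noteq> 0"
  shows "(\<exists>!P. P *v e = 0 \<and> herm P = - V \<and> tridiag (skew P))
       \<and> (\<forall>P. P *v e = 0 \<and> herm P = - V \<and> tridiag (skew P) \<longrightarrow>
               (\<forall>i\<in>{1..CARD('n)}. (\<Sum>k=1..CARD('n) - 1.
                   Tmat e i k * skew P $ ix k $ ix (k + 1)) = (V *v e) $ ix i)
             \<and> (\<forall>q :: nat \<Rightarrow> real.
                  (\<forall>i\<in>{1..CARD('n)}. (\<Sum>k=1..CARD('n) - 1. Tmat e i k * q k) = (V *v e) $ ix i)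
                  \<longrightarrow> (\<forall>k\<in>{1..CARD('n) - 1}. q k = skew P $ ix k $ ix (k + 1))))"
proof -
  let ?N = "CARD('n)"
  define v where "v i = (V *v e) $ ix i" for i
  have orth': "(\<Sum>i=1..?N. e $ ix i * v i) = 0"
    using orth by (simp add: inner_vec_def sum_ix v_def)
  define good where "good P \<longleftrightarrow> P *v e = 0 \<and> herm P = - V \<and> tridiag (skew P)" for P
  have rowsP: "\<forall>i\<in>{1..?N}. rowf e (\<lambda>k. skew P $ ix k $ ix (k+1)) i = v i" if "good P" for P
  proof
    fix i assume i: "i \<in> {1..?N}"
    have "rowf e (\<lambda>k. skew P $ ix k $ ix (k+1)) i = (skew P *v e) $ ix i"
      using Ssum[OF skew_transpose _ i] that unfolding good_def by simp
    also have "\<dots> = v i" using skew_mult[of P e V] that unfolding good_def v_def by simp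
    finally show "rowf e (\<lambda>k. skew P $ ix k $ ix (k+1)) i = v i" .
  qed
  have uniq_q: "\<forall>k\<in>{1..?N - 1}. q k = p k"
    if "\<forall>i\<in>{1..?N}. rowf e q i = v i" "\<forall>i\<in>{1..?N}. rowf e p i = v i" for q p
  proof -
    have "\<forall>k\<in>{1..?N - 1}. (\<lambda>k. q k - p k) k = 0"
    proof (rule kernel[OF _ ne hyp])
      fix i assume i: "i \<in> {1..?N}"
      have "rowf e (\<lambda>k. q k - p k) i = rowf e q i - rowf e p i"
        by (simp add: rowf_def algebra_simps)
      then show "rowf e (\<lambda>k. q k - p k) i = 0"
        using that i by simp
    qed
    then show ?thesis by simp
  qed
  have second: "(\<forall>i\<in>{1..?N}. (\<Sum>k=1..?N - 1. Tmat e i k * skew P $ ix k $ ix (k + 1)) = (V *v e) $ ix i)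
             \<and> (\<forall>q :: nat \<Rightarrow> real.
                  (\<forall>i\<in>{1..?N}. (\<Sum>k=1..?N - 1. Tmat e i k * q k) = (V *v e) $ ix i)
                  \<longrightarrow> (\<forall>k\<in>{1..?N - 1}. q k = skew P $ ix k $ ix (k + 1)))" if "good P" for P
  proof (intro conjI allI impI)
    show "\<forall>i\<in>{1..?N}. (\<Sum>k=1..?N - 1. Tmat e i k * skew P $ ix k $ ix (k + 1)) = (V *v e) $ ix i"
      using rowsP[OF that] Tsum[where 'n='n] by (simp add: v_def)
    fix q assume "\<forall>i\<in>{1..?N}. (\<Sum>k=1..?N - 1. Tmat e i k * q k) = (V *v e) $ ix i"
    then have "\<forall>i\<in>{1..?N}. rowf e q i = v i" using Tsum[where 'n='n] by (simp add: v_def)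
    then show "\<forall>k\<in>{1..?N - 1}. q k = skew P $ ix k $ ix (k + 1)"
      using uniq_q rowsP[OF that] by blast
  qed
  obtain q where q: "\<forall>i\<in>{1..?N}. rowf e q i = v i"
    using exist_sol[OF ne hyp orth'] by blast
  define r where "r a = inv_into {1..?N} ix a" for a :: 'n
  have r1: "r a \<in> {1..?N}" for a
  proof -
    have "ix ` {1..?N} = (UNIV :: 'n set)" using ix_bij[where 'n='n] by (simp add: bij_betw_imp_surj_on)
    then have "a \<in> ix ` {1..?N}" by simp
    then show ?thesis unfolding r_def by (rule inv_into_into)
  qed
  have r2: "ix (r a) = a" for a
    unfolding r_def using ix_bij[where 'n='n] by (meson UNIV_I bij_betw_inv_into_right)
  have r3: "r (ix k) = k" if "k \<in> {1..?N}" for k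
    unfolding r_def using ix_bij[where 'n='n] that by (meson bij_betw_inv_into_left)
  define S :: "real^'n::{finite,linorder}^'n::{finite,linorder}" where
    "S = (\<chi> a b. if r b = r a + 1 then q (r a) else if r a = r b + 1 then - q (r b) else 0)"
  have Sskew: "transpose S = - S"
    unfolding S_def by (auto simp: vec_eq_iff transpose_def)
  have skewS: "skew S = S"
    unfolding skew_def Sskew by (simp add: vec_eq_iff)
  have hermS: "herm S = 0"
    unfolding herm_def Sskew by (simp add: vec_eq_iff)
  have Str: "tridiag S"
    unfolding tridiag_def S_def using r3 by auto
  have Ssup: "S $ ix k $ ix (k+1) = q k" if "k \<in> {1..?N - 1}" for k
    unfolding S_def using r3 that by auto
  have Se: "S *v e = V *v e"
  proof (rule vec_eq_ix)
    fix i assume i: "i \<in> {1..?N}"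
    have a1: "S $ ix (i-1) $ ix i = q (i-1)" if "2 \<le> i"
    proof -
      have m: "i - 1 \<in> {1..?N - 1}" using i that by auto
      have "i - 1 + 1 = i" using that by simp
      then show ?thesis using Ssup[OF m] by simp
    qed
    have a2: "S $ ix i $ ix (i+1) = q i" if "i + 1 \<le> ?N"
      using Ssup[of "i"] i that by simp
    have "(S *v e) $ ix i = rowf e (\<lambda>k. S $ ix k $ ix (k+1)) i" by (rule Ssum[OF Sskew Str i])
    also have "\<dots> = rowf e q i"
      unfolding rowf_def using a1 a2 by auto
    also have "\<dots> = (V *v e) $ ix i" using q i by (simp add: v_def)
    finally show "(S *v e) $ ix i = (V *v e) $ ix i" .
  qed
  define P0 where "P0 = S - V"
  have hermV: "herm V = V" using symV by (simp add: herm_def)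
  have skewV: "skew V = 0" using symV by (simp add: skew_def)
  have gP0: "good P0"
    unfolding good_def P0_def
  proof (intro conjI)
    show "(S - V) *v e = 0" using Se by (simp add: matrix_vector_mult_diff_rdistrib)
    have "herm (S - V) = herm S - herm V"
      by (simp add: herm_def transpose_def vec_eq_iff algebra_simps)
    then show "herm (S - V) = - V" using hermS hermV by simp
    have "skew (S - V) = skew S - skew V"
      by (simp add: skew_def transpose_def vec_eq_iff algebra_simps)
    then have "skew (S - V) = S" using skewS skewV by simp
    then show "tridiag (skew (S - V))" using Str by simp
  qed
  have uniqP: "P1 = P2" if g1: "good P1" and g2: "good P2" for P1 P2
  proof -
    let ?S1 = "skew P1" and ?S2 = "skew P2"
    have sup: "\<forall>k\<in>{1..?N - 1}. ?S1 $ ix k $ ix (k+1) = ?S2 $ ix k $ ix (k+1)"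
      using uniq_q[OF rowsP[OF g1] rowsP[OF g2]] by simp
    have anti: "S' $ a $ b = - S' $ b $ a" if "transpose S' = - S'" for S' :: "real^'n::{finite,linorder}^'n::{finite,linorder}" and a b
    proof -
      have "transpose S' $ b $ a = - S' $ b $ a" using that by simp
      then show ?thesis by (simp add: transpose_def)
    qed
    have "?S1 = ?S2"
    proof (rule vec_eq_ix)
      fix i assume i: "i \<in> {1..?N}"
      show "?S1 $ ix i = ?S2 $ ix i"
      proof (rule vec_eq_ix)
        fix j assume j: "j \<in> {1..?N}"
        consider "j = i + 1" | "i = j + 1" | "i = j" | "i + 1 < j \<or> j + 1 < i" by linarith
        then show "?S1 $ ix i $ ix j = ?S2 $ ix i $ ix j"
        proof cases
          case 1 then show ?thesis using sup i j by auto
        next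
          case 2
          have "?S1 $ ix i $ ix j = - ?S1 $ ix j $ ix (j+1)"
          proof -
            have "?S1 $ ix i $ ix j = - ?S1 $ ix j $ ix i" by (rule anti[OF skew_transpose[of P1]])
            then show ?thesis using 2 by simp
          qed
          moreover have "?S2 $ ix i $ ix j = - ?S2 $ ix j $ ix (j+1)"
          proof -
            have "?S2 $ ix i $ ix j = - ?S2 $ ix j $ ix i" by (rule anti[OF skew_transpose[of P2]])
            then show ?thesis using 2 by simp
          qed
          ultimately show ?thesis using sup i j 2 by auto
        next
          case 3
          have "?S1 $ ix i $ ix i = 0" "?S2 $ ix i $ ix i = 0"
            using anti[OF skew_transpose[of P1], of "ix i" "ix i"]
                  anti[OF skew_transpose[of P2], of "ix i" "ix i"] by auto
          then show ?thesis using 3 by simp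
        next
          case 4 then show ?thesis using g1 g2 i j unfolding good_def tridiag_def by auto
        qed
      qed
    qed
    moreover have "herm P1 = herm P2" using g1 g2 unfolding good_def by simp
    ultimately show ?thesis using herm_skew_sum[of P1] herm_skew_sum[of P2] by metis
  qed
  have A: "\<exists>!P. good P"
  proof (rule ex1I[of good P0])
    show "good P0" by (rule gP0)
    fix P assume "good P" then show "P = P0" using uniqP gP0 by simp
  qed
  have B: "\<forall>P. good P \<longrightarrow> (\<forall>i\<in>{1..?N}. (\<Sum>k=1..?N - 1. Tmat e i k * skew P $ ix k $ ix (k + 1)) = (V *v e) $ ix i)
             \<and> (\<forall>q :: nat \<Rightarrow> real.
                  (\<forall>i\<in>{1..?N}. (\<Sum>k=1..?N - 1. Tmat e i k * q k) = (V *v e) $ ix i)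
                  \<longrightarrow> (\<forall>k\<in>{1..?N - 1}. q k = skew P $ ix k $ ix (k + 1)))"
    using second by (intro allI impI)
  from A B show ?thesis unfolding good_def by (rule conjI)
qed


lemma inner_transpose:
  fixes A :: "real^'n^'n"
  shows "x \<bullet> (transpose A *v x) = x \<bullet> (A *v x)"
proof -
  have "x \<bullet> (transpose A *v x) = (\<Sum>i\<in>UNIV. \<Sum>j\<in>UNIV. x$i * (A$j$i * x$j))"
    by (simp add: inner_vec_def matrix_vector_mult_def transpose_def sum_distrib_left)
  also have "\<dots> = (\<Sum>j\<in>UNIV. \<Sum>i\<in>UNIV. x$i * (A$j$i * x$j))" by (rule sum.swap)
  also have "\<dots> = (\<Sum>j\<in>UNIV. \<Sum>i\<in>UNIV. x$j * (A$j$i * x$i))"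
    by (intro sum.cong refl) (simp add: mult.commute mult.left_commute)
  also have "\<dots> = x \<bullet> (A *v x)"
    by (simp add: inner_vec_def matrix_vector_mult_def sum_distrib_left)
  finally show ?thesis .
qed

lemma inner_skew0:
  fixes A :: "real^'n^'n"
  assumes "A = - transpose A"
  shows "x \<bullet> (A *v x) = 0"
proof -
  have n: "(- transpose A) *v x = - (transpose A *v x)"
    by (simp add: vec_eq_iff matrix_vector_mult_def sum_negf)
  have "x \<bullet> (A *v x) = x \<bullet> ((- transpose A) *v x)" using assms by metis
  also have "\<dots> = - (x \<bullet> (transpose A *v x))" unfolding n by (rule inner_minus_right)
  also have "\<dots> = - (x \<bullet> (A *v x))" unfolding inner_transpose ..
  finally show ?thesis by simp
qed

theorem mainTheorem6:
  fixes H :: "real^('n::{finite,linorder}) \<Rightarrow> real"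
    and \<eta> f :: "real^('n::{finite,linorder}) \<Rightarrow> real^('n::{finite,linorder})"
    and B :: "real^('n::{finite,linorder}) \<Rightarrow> real^'m^('n::{finite,linorder})"
    and J :: "real^('n::{finite,linorder}) \<Rightarrow> real^('n::{finite,linorder})^('n::{finite,linorder})"
  assumes H_nonneg: "\<And>z. H z \<ge> 0"
    and H_grad: "\<And>z. (H has_derivative (\<lambda>v. \<eta> z \<bullet> v)) (at z)"
    and P_prop: "\<exists>(p::nat) l.
                   \<forall>z. \<eta> z \<bullet> f z = - (\<Sum>i<p. (l z i)\<^sup>2)"
    and f_C1: "C1_map f"
    and eta_C1: "C1_map \<eta>"
    and eta_bij: "bij \<eta>"
    and f_zero: "f (inv \<eta> 0) = 0"
    and Deta_inv: "\<And>z. invertible (jac \<eta> z)"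
    and J_skew: "\<And>z. J z = - transpose (J z)"
    and f_J: "\<And>z. f z = J z *v \<eta> z"
  shows "(\<exists>P. \<forall>z.
            P z *v \<eta> z = 0 \<and> herm (Mmat f \<eta> z) + herm (P z) = 0)
       \<and> (\<forall>z. \<eta> z \<noteq> 0 \<and> (\<forall>i\<in>{2..CARD('n) - 1}. \<eta> z $ ix i \<noteq> 0) \<longrightarrow>
            (\<exists>!P. P *v \<eta> z = 0 \<and> herm P = - herm (Mmat f \<eta> z)
                                 \<and> tridiag (skew P))
          \<and> (\<forall>P. P *v \<eta> z = 0 \<and> herm P = - herm (Mmat f \<eta> z)
                                 \<and> tridiag (skew P) \<longrightarrow>
               (\<forall>i\<in>{1..CARD('n)}. (\<Sum>k=1..CARD('n) - 1.
                   Tmat (\<eta> z) i k * skew P $ ix k $ ix (k + 1))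
                 = (herm (Mmat f \<eta> z) *v \<eta> z) $ ix i)
             \<and> (\<forall>q :: nat \<Rightarrow> real.
                  (\<forall>i\<in>{1..CARD('n)}. (\<Sum>k=1..CARD('n) - 1. Tmat (\<eta> z) i k * q k)
                     = (herm (Mmat f \<eta> z) *v \<eta> z) $ ix i)
                  \<longrightarrow> (\<forall>k\<in>{1..CARD('n) - 1}. q k = skew P $ ix k $ ix (k + 1)))))"
proof -
  have key: "\<And>z. f z = Mmat f \<eta> z *v \<eta> z"
    by (rule key_M[OF f_C1 eta_C1 eta_bij f_zero Deta_inv])
  have Jorth: "\<And>z. \<eta> z \<bullet> (J z *v \<eta> z) = 0"
    by (rule inner_skew0[OF J_skew])
  have part1: "\<exists>P. \<forall>z. P z *v \<eta> z = 0 \<and> herm (Mmat f \<eta> z) + herm (P z) = 0"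
  proof (intro exI allI conjI)
    fix z
    show "(J z - Mmat f \<eta> z) *v \<eta> z = 0"
    proof -
      have e: "Mmat f \<eta> z *v \<eta> z = J z *v \<eta> z" using key[of z] f_J[of z] by metis
      show ?thesis by (simp add: matrix_vector_mult_diff_rdistrib e)
    qed
    have tn: "transpose (- X) = - transpose X" for X :: "real^'n::{finite,linorder}^'n::{finite,linorder}"
      by (simp add: vec_eq_iff transpose_def)
    have "transpose (J z) = transpose (- transpose (J z))" by (metis J_skew)
    then have tJ: "transpose (J z) = - J z" by (simp only: tn transpose_transpose)
    have hJ: "herm (J z) = 0" unfolding herm_def tJ by simp
    have "herm (Mmat f \<eta> z) + herm (J z - Mmat f \<eta> z) = herm (J z)"
      by (simp add: herm_def vec_eq_iff transpose_def algebra_simps)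
    then show "herm (Mmat f \<eta> z) + herm (J z - Mmat f \<eta> z) = 0"
      using hJ by simp
  qed
  have part2': "\<eta> z \<noteq> 0 \<and> (\<forall>i\<in>{2..CARD('n) - 1}. \<eta> z $ ix i \<noteq> 0) \<longrightarrow>
            (\<exists>!P. P *v \<eta> z = 0 \<and> herm P = - herm (Mmat f \<eta> z)
                                 \<and> tridiag (skew P))
          \<and> (\<forall>P. P *v \<eta> z = 0 \<and> herm P = - herm (Mmat f \<eta> z)
                                 \<and> tridiag (skew P) \<longrightarrow>
               (\<forall>i\<in>{1..CARD('n)}. (\<Sum>k=1..CARD('n) - 1.
                   Tmat (\<eta> z) i k * skew P $ ix k $ ix (k + 1))
                 = (herm (Mmat f \<eta> z) *v \<eta> z) $ ix i)
             \<and> (\<forall>q :: nat \<Rightarrow> real.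
                  (\<forall>i\<in>{1..CARD('n)}. (\<Sum>k=1..CARD('n) - 1. Tmat (\<eta> z) i k * q k)
                     = (herm (Mmat f \<eta> z) *v \<eta> z) $ ix i)
                  \<longrightarrow> (\<forall>k\<in>{1..CARD('n) - 1}. q k = skew P $ ix k $ ix (k + 1))))" for z
  proof (intro impI)
    assume h: "\<eta> z \<noteq> 0 \<and> (\<forall>i\<in>{2..CARD('n) - 1}. \<eta> z $ ix i \<noteq> 0)"
    let ?M = "Mmat f \<eta> z"
    have sym: "transpose (herm ?M) = herm ?M"
      by (simp add: herm_def vec_eq_iff transpose_def add.commute)
    have "herm ?M *v \<eta> z = (1/2) *\<^sub>R (?M *v \<eta> z + transpose ?M *v \<eta> z)"
      unfolding herm_def by (simp only: scaleR_matrix_vector_assoc[symmetric] matrix_vector_mult_add_rdistrib)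
    then have "\<eta> z \<bullet> (herm ?M *v \<eta> z) = (1/2) * (\<eta> z \<bullet> (?M *v \<eta> z) + \<eta> z \<bullet> (transpose ?M *v \<eta> z))"
      by (simp add: inner_add_right)
    also have "\<dots> = \<eta> z \<bullet> (?M *v \<eta> z)" unfolding inner_transpose by simp
    also have "\<dots> = 0" using key[of z] f_J[of z] Jorth[of z] by metis
    finally have orth: "\<eta> z \<bullet> (herm ?M *v \<eta> z) = 0" .
    show "(\<exists>!P. P *v \<eta> z = 0 \<and> herm P = - herm ?M \<and> tridiag (skew P))
          \<and> (\<forall>P. P *v \<eta> z = 0 \<and> herm P = - herm ?M \<and> tridiag (skew P) \<longrightarrow>
               (\<forall>i\<in>{1..CARD('n)}. (\<Sum>k=1..CARD('n) - 1.
                   Tmat (\<eta> z) i k * skew P $ ix k $ ix (k + 1))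
                 = (herm ?M *v \<eta> z) $ ix i)
             \<and> (\<forall>q :: nat \<Rightarrow> real.
                  (\<forall>i\<in>{1..CARD('n)}. (\<Sum>k=1..CARD('n) - 1. Tmat (\<eta> z) i k * q k)
                     = (herm ?M *v \<eta> z) $ ix i)
                  \<longrightarrow> (\<forall>k\<in>{1..CARD('n) - 1}. q k = skew P $ ix k $ ix (k + 1))))"
      by (rule part2[OF sym orth]) (use h in auto)
  qed
  show ?thesis by (rule conjI[OF part1], rule allI, rule part2')
qed

end
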